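(* Let $A$ be a finite alphabet. An infinite word $x$ over $A$ is normal if and only if there is a positive number $C$ such that for infinitely many lengths $\ell$, for every word $w$ of length $\ell$, $$\limsup_{N\to\infty}\frac{|x[1..\ell N]|^{al}_w}{N}<\frac{C}{|A|^\ell}.$$
   Context: $x[i..j]$ is the factor of $x$ from position $i$ to $j$ (positions start at 1). For words $v,w$, $|v|^{al}_w=|\{i: v[i..i+|w|-1]=w,\ i\equiv1\bmod|w|\}|$ (aligned occurrences). $x$ is normal if for every $\ell\ge1$ and every $u\in A^\ell$, $\lim_{n\to\infty}|x[1..n]|^{al}_u/(n/\ell)=|A|^{-\ell}$. *)

theory Defs
  imports Complex_Main "HOL-Library.Liminf_Limsup" "HOL-Library.Extended_Real"
begin

text \<open>Infinite words are functions nat => 'a; x 0 is the letter at position 1.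
  Finite words are lists.\<close>

definition prefix_word :: "(nat \<Rightarrow> 'a) \<Rightarrow> nat \<Rightarrow> 'a list" where
  "prefix_word x n = map x [0..<n]"

text \<open>Factor v[i..j] (positions start at 1).\<close>
definition factor :: "'a list \<Rightarrow> nat \<Rightarrow> nat \<Rightarrow> 'a list" where
  "factor v i j = take (Suc j - i) (drop (i - 1) v)"

definition aligned_occ :: "'a list \<Rightarrow> 'a list \<Rightarrow> nat" where
  "aligned_occ v w = card {i. 1 \<le> i \<and> i + length w - 1 \<le> length v \<and>
       factor v i (i + length w - 1) = w \<and> i mod length w = 1 mod length w}"

definition normal_word :: "'a set \<Rightarrow> (nat \<Rightarrow> 'a) \<Rightarrow> bool" where
  "normal_word A x \<longleftrightarrow> (\<forall>l\<ge>1. \<forall>u. length u = l \<and> set u \<subseteq> A \<longrightarrow>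
     (\<lambda>n. real (aligned_occ (prefix_word x n) u) / (real n / real l))
       \<longlonglongrightarrow> 1 / real (card A) ^ l)"

end

theory Submission
  imports Defs "HOL-Library.FuncSet" "HOL-Library.Infinite_Set"
begin


definition Bk :: "(nat \<Rightarrow> 'a) \<Rightarrow> nat \<Rightarrow> nat \<Rightarrow> 'a list" where
  "Bk x L j = map (\<lambda>q. x (j*L+q)) [0..<L]"

lemma factor_prefix:
  assumes "j*L + L \<le> n"
  shows "factor (prefix_word x n) (j*L+1) (j*L+1+L-1) = Bk x L j"
  using assms by (auto simp: factor_def prefix_word_def Bk_def list_eq_iff_nth_eq)

lemma aligned_occ_Bk:
  assumes "L \<ge> 1" "length w = L"
  shows "aligned_occ (prefix_word x n) w = card {j. j < n div L \<and> Bk x L j = w}"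
proof -
  have eq: "{i. 1 \<le> i \<and> i + length w - 1 \<le> length (prefix_word x n) \<and>
       factor (prefix_word x n) i (i + length w - 1) = w \<and> i mod length w = 1 mod length w}
     = (\<lambda>j. j*L+1) ` {j. j < n div L \<and> Bk x L j = w}" (is "?S = ?T")
  proof
    show "?S \<subseteq> ?T"
    proof
      fix i assume i: "i \<in> ?S"
      define j where "j = (i-1) div L"
      have "L dvd i - 1" using i assms mod_eq_dvd_iff_nat[of 1 i L] by auto
      then have ij: "i = j*L+1" using i unfolding j_def by simp
      have le: "j*L + L \<le> n" using i ij assms by (simp add: prefix_word_def)
      then have "Suc j \<le> n div L" using assms less_eq_div_iff_mult_less_eq[of L "Suc j" n] by simp
      then have "j < n div L" by simp
      moreover have "Bk x L j = w" using factor_prefix[OF le, of x] i ij assms by simp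
      ultimately show "i \<in> ?T" using ij by auto
    qed
  next
    show "?T \<subseteq> ?S"
    proof
      fix i assume "i \<in> ?T"
      then obtain j where j: "j < n div L" "Bk x L j = w" "i = j*L+1" by auto
      have "Suc j \<le> n div L" using j by simp
      then have le: "j*L + L \<le> n" using assms less_eq_div_iff_mult_less_eq[of L "Suc j" n] by simp
      show "i \<in> ?S" using j le factor_prefix[OF le, of x] assms
        by (auto simp: prefix_word_def mod_Suc)
    qed
  qed
  have "inj_on (\<lambda>j. j*L+1) {j. j < n div L \<and> Bk x L j = w}" using assms
    by (auto simp: inj_on_def)
  then show ?thesis unfolding aligned_occ_def eq by (simp add: card_image)
qed



lemma card_fix:
  assumes "finite A" "P \<subseteq> {..<n}" "\<forall>i\<in>P. g i \<in> A"
  shows "card {w. length w = n \<and> set w \<subseteq> A \<and> (\<forall>i\<in>P. w!i = g i)} = card A ^ (n - card P)"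
proof -
  let ?S = "{w. length w = n \<and> set w \<subseteq> A \<and> (\<forall>i\<in>P. w!i = g i)}"
  let ?Q = "{..<n} - P"
  have bij: "bij_betw (\<lambda>w. restrict (nth w) ?Q) ?S (PiE ?Q (\<lambda>_. A))"
  proof (rule bij_betwI')
    fix w v assume "w \<in> ?S" "v \<in> ?S"
    then show "(restrict (nth w) ?Q = restrict (nth v) ?Q) = (w = v)"
      apply (auto simp: list_eq_iff_nth_eq)
      by (metis Diff_iff lessThan_iff restrict_apply')
  next
    fix w assume "w \<in> ?S"
    then show "restrict (nth w) ?Q \<in> PiE ?Q (\<lambda>_. A)"
      by (auto simp: PiE_def Pi_def nth_mem subset_iff)
  next
    fix f assume f: "f \<in> PiE ?Q (\<lambda>_. A)"
    define w where "w = map (\<lambda>i. if i \<in> P then g i else f i) [0..<n]"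
    have "w \<in> ?S" using f assms unfolding w_def
      by (auto simp: PiE_def Pi_def set_conv_nth)
    moreover have "f = restrict (nth w) ?Q" using f unfolding w_def
      by (auto simp: PiE_def extensional_def fun_eq_iff)
    ultimately show "\<exists>w\<in>?S. f = restrict (nth w) ?Q" by blast
  qed
  have "card ?S = card (PiE ?Q (\<lambda>_. A))" using bij_betw_same_card[OF bij] .
  also have "\<dots> = card A ^ card ?Q" by (simp add: card_PiE)
  also have "card ?Q = n - card P" using assms(2)
    by (simp add: card_Diff_subset finite_subset)
  finally show ?thesis .
qed

lemma shift_all: "(\<forall>i<(k::nat). f ((r::nat)+i) = g i) \<longleftrightarrow> (\<forall>i\<in>{r..<r+k}. f i = g (i-r))"
proof
  assume H: "\<forall>i<k. f (r+i) = g i"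
  show "\<forall>i\<in>{r..<r+k}. f i = g (i-r)"
  proof
    fix i assume "i \<in> {r..<r+k}"
    then have "i - r < k" "r + (i - r) = i" by auto
    then show "f i = g (i-r)" using H by metis
  qed
next
  assume H: "\<forall>i\<in>{r..<r+k}. f i = g (i-r)"
  show "\<forall>i<k. f (r+i) = g i"
  proof (intro allI impI)
    fix i assume "i < k"
    then have "r + i \<in> {r..<r+k}" by auto
    then show "f (r+i) = g i" using H by force
  qed
qed

definition slotm :: "'a list \<Rightarrow> 'a list \<Rightarrow> nat \<Rightarrow> bool" where
  "slotm u w r \<longleftrightarrow> (\<forall>i<length u. w!(r+i) = u!i)"

lemma slotm_iff: "slotm u w r \<longleftrightarrow> (\<forall>i\<in>{r..<r+length u}. w!i = u!(i-r))"
  unfolding slotm_def using shift_all[of "length u" "nth w" r "nth u"] by simp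

lemma slot1:
  assumes "finite A" "set u \<subseteq> A" "r + length u \<le> n"
  shows "card {w. length w = n \<and> set w \<subseteq> A \<and> slotm u w r} = card A ^ (n - length u)"
proof -
  have eq: "{w. length w = n \<and> set w \<subseteq> A \<and> slotm u w r} =
     {w. length w = n \<and> set w \<subseteq> A \<and> (\<forall>i\<in>{r..<r+length u}. w!i = u!(i-r))}"
    unfolding slotm_iff by (rule refl)
  have P: "{r..<r+length u} \<subseteq> {..<n}" using assms(3) by auto
  have g: "\<forall>i\<in>{r..<r+length u}. u!(i-r) \<in> A"
  proof
    fix i assume "i \<in> {r..<r+length u}"
    then have "i - r < length u" by auto
    then show "u!(i-r) \<in> A" using assms(2) nth_mem by blast
  qed
  have c: "card {r..<r+length u} = length u" by simp
  have cf: "card {w. length w = n \<and> set w \<subseteq> A \<and> (\<forall>i\<in>{r..<r+length u}. w!i = u!(i-r))} = card A ^ (n - card {r..<r+length u})"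
    by (rule card_fix[of A "{r..<r+length u}" n "\<lambda>i. u!(i-r)", OF assms(1) P g])
  show ?thesis unfolding eq cf c by (rule refl)
qed

lemma slot2:
  assumes "finite A" "set u \<subseteq> A" "r + length u \<le> r'" "r' + length u \<le> n"
  shows "card {w. length w = n \<and> set w \<subseteq> A \<and> slotm u w r \<and> slotm u w r'} = card A ^ (n - 2 * length u)"
proof -
  let ?k = "length u"
  let ?g = "\<lambda>i. if i < r + ?k then u!(i-r) else u!(i-r')"
  let ?P = "{r..<r+?k} \<union> {r'..<r'+?k}"
  have iff: "\<And>w. (\<forall>i\<in>?P. w!i = ?g i) \<longleftrightarrow>
       (\<forall>i\<in>{r..<r+?k}. w!i = u!(i-r)) \<and> (\<forall>i\<in>{r'..<r'+?k}. w!i = u!(i-r'))"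
  proof -
    fix w
    have a: "(\<forall>i\<in>{r..<r+?k}. w!i = ?g i) \<longleftrightarrow> (\<forall>i\<in>{r..<r+?k}. w!i = u!(i-r))"
      by (rule ball_cong) auto
    have b: "(\<forall>i\<in>{r'..<r'+?k}. w!i = ?g i) \<longleftrightarrow> (\<forall>i\<in>{r'..<r'+?k}. w!i = u!(i-r'))"
      by (rule ball_cong) (use assms(3) in auto)
    show "?thesis w" unfolding ball_Un a b by (rule refl)
  qed
  have eq: "{w. length w = n \<and> set w \<subseteq> A \<and> slotm u w r \<and> slotm u w r'} =
     {w. length w = n \<and> set w \<subseteq> A \<and> (\<forall>i\<in>?P. w!i = ?g i)}"
    unfolding slotm_iff iff by (rule refl)
  have P: "?P \<subseteq> {..<n}" using assms(3,4) by auto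
  have g: "\<forall>i\<in>?P. ?g i \<in> A"
  proof
    fix i assume "i \<in> ?P"
    then have "(i < r + ?k \<and> i - r < ?k) \<or> (\<not> i < r + ?k \<and> i - r' < ?k)" using assms(3) by auto
    then show "?g i \<in> A" using assms(2) nth_mem by (metis subsetD)
  qed
  have c: "card ?P = 2 * ?k"
    using assms(3) by (subst card_Un_disjoint) auto
  have cf: "card {w. length w = n \<and> set w \<subseteq> A \<and> (\<forall>i\<in>?P. w!i = ?g i)} = card A ^ (n - card ?P)"
    by (rule card_fix[of A ?P n ?g, OF assms(1) P g])
  show ?thesis unfolding eq cf c by (rule refl)
qed



definition Wd :: "'a set \<Rightarrow> nat \<Rightarrow> 'a list set" where
  "Wd A n = {w. length w = n \<and> set w \<subseteq> A}"

lemma Wd_finite: "finite A \<Longrightarrow> finite (Wd A n)"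
  unfolding Wd_def using finite_lists_length_eq[of A n] by (simp add: conj_commute)

lemma Wd_card: "finite A \<Longrightarrow> card (Wd A n) = card A ^ n"
  unfolding Wd_def using card_lists_length_eq[of A n] by (simp add: conj_commute)

definition Ind :: "'a list \<Rightarrow> 'a list \<Rightarrow> nat \<Rightarrow> real" where
  "Ind u w r = (if slotm u w r then 1 else 0)"

definition cs :: "'a list \<Rightarrow> nat \<Rightarrow> nat \<Rightarrow> 'a list \<Rightarrow> real" where
  "cs u n s w = (\<Sum>t<(n-s) div length u. Ind u w (s + t * length u))"

lemma sum_Ind_card:
  assumes "finite S"
  shows "(\<Sum>w\<in>S. (if P w then 1 else 0::real)) = real (card {w\<in>S. P w})"
  using assms by (simp add: sum.If_cases Int_def)

lemma slot_pos:
  fixes t n s k :: nat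
  assumes "t < (n - s) div k" "k \<ge> 1"
  shows "s + t*k + k \<le> n"
proof -
  have "Suc t \<le> (n - s) div k" using assms by simp
  then have "Suc t * k \<le> n - s" using assms less_eq_div_iff_mult_less_eq[of k "Suc t" "n-s"] by simp
  moreover have "n - s > 0" using assms by (metis div_0 gr0I less_nat_zero_code)
  ultimately show ?thesis by simp
qed

lemma pair_sum:
  assumes A: "finite A" "A \<noteq> {}" and u: "set u \<subseteq> A" "length u = k" "k \<ge> 1"
    and t: "t < (n-s) div k" "t' < (n-s) div k"
  shows "(\<Sum>w\<in>Wd A n. Ind u w (s+t*k) * Ind u w (s+t'*k)) =
     (if t = t' then real (card A) ^ n / real (card A) ^ k else real (card A) ^ n / (real (card A) ^ k)^2)"
proof -
  let ?b = "real (card A)"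
  have b0: "?b > 0" using A by (simp add: card_gt_0_iff)
  have p1: "s + t*k + k \<le> n" "s + t'*k + k \<le> n" using slot_pos[OF t(1) u(3)] slot_pos[OF t(2) u(3)] by auto
  show ?thesis
  proof (cases "t = t'")
    case True
    have "(\<Sum>w\<in>Wd A n. Ind u w (s+t*k) * Ind u w (s+t'*k)) = (\<Sum>w\<in>Wd A n. (if slotm u w (s+t*k) then 1 else 0))"
      using True by (intro sum.cong) (auto simp: Ind_def)
    also have "\<dots> = real (card {w\<in>Wd A n. slotm u w (s+t*k)})"
      by (rule sum_Ind_card[OF Wd_finite[OF A(1)]])
    also have "{w\<in>Wd A n. slotm u w (s+t*k)} = {w. length w = n \<and> set w \<subseteq> A \<and> slotm u w (s+t*k)}"
      unfolding Wd_def by auto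
    also have "card \<dots> = card A ^ (n - k)" using slot1[OF A(1) u(1), of "s+t*k" n] p1 u by simp
    also have "real (card A ^ (n - k)) = ?b ^ n / ?b ^ k"
    proof -
      have kn: "k \<le> n" using p1 by simp
      have "?b ^ n = ?b^(n-k) * ?b^k" using kn by (metis le_add_diff_inverse2 power_add)
      then show ?thesis using b0 by (simp add: field_simps)
    qed
    finally show ?thesis using True by simp
  next
    case False
    define r1 where "r1 = min (s+t*k) (s+t'*k)"
    define r2 where "r2 = max (s+t*k) (s+t'*k)"
    have r12: "r1 + k \<le> r2" "r2 + k \<le> n"
    proof -
      show "r2 + k \<le> n" unfolding r2_def using p1 by simp
      have "t < t' \<or> t' < t" using False by arith
      then show "r1 + k \<le> r2" unfolding r1_def r2_def
      proof
        assume "t < t'" then have "Suc t * k \<le> t' * k" by (intro mult_le_mono1) simp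
        then show "min (s + t * k) (s + t' * k) + k \<le> max (s + t * k) (s + t' * k)" by simp
      next
        assume "t' < t" then have "Suc t' * k \<le> t * k" by (intro mult_le_mono1) simp
        then show "min (s + t * k) (s + t' * k) + k \<le> max (s + t * k) (s + t' * k)" by simp
      qed
    qed
    have "(\<Sum>w\<in>Wd A n. Ind u w (s+t*k) * Ind u w (s+t'*k)) = (\<Sum>w\<in>Wd A n. (if slotm u w r1 \<and> slotm u w r2 then 1 else 0))"
      unfolding r1_def r2_def by (intro sum.cong) (auto simp: Ind_def min_def max_def)
    also have "\<dots> = real (card {w\<in>Wd A n. slotm u w r1 \<and> slotm u w r2})"
      by (rule sum_Ind_card[OF Wd_finite[OF A(1)]])
    also have "{w\<in>Wd A n. slotm u w r1 \<and> slotm u w r2} = {w. length w = n \<and> set w \<subseteq> A \<and> slotm u w r1 \<and> slotm u w r2}"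
      unfolding Wd_def by auto
    also have "card \<dots> = card A ^ (n - 2*k)" using slot2[OF A(1) u(1), of r1 r2 n] r12 u by simp
    also have "real (card A ^ (n - 2*k)) = ?b ^ n / (?b ^ k)^2"
    proof -
      have kn: "2*k \<le> n" using r12 by simp
      have "?b ^ n = ?b^(n-2*k) * ?b^(2*k)" using kn by (metis le_add_diff_inverse2 power_add)
      moreover have "?b^(2*k) = (?b^k)^2" by (simp add: power_mult[symmetric] mult.commute)
      ultimately show ?thesis using b0 by (simp add: field_simps)
    qed
    finally show ?thesis using False by simp
  qed
qed

lemma Ind_sq: "Ind u w r * Ind u w r = Ind u w r" by (simp add: Ind_def)

lemma sum_delta_const:
  assumes "t < m"
  shows "(\<Sum>t'<m. (if t = t' then a else c)) = a + (real m - 1) * (c::real)"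
proof -
  have "(\<Sum>t'<m. (if t = t' then a else c)) = (\<Sum>t'<m. c + (if t = t' then a - c else 0))"
    by (intro sum.cong) auto
  also have "\<dots> = real m * c + (a - c)" using assms by (simp add: sum.distrib)
  finally show ?thesis by (simp add: algebra_simps)
qed

lemma second_moment:
  assumes A: "finite A" "A \<noteq> {}" and u: "set u \<subseteq> A" "length u = k" "k \<ge> 1"
  shows "(\<Sum>w\<in>Wd A n. (cs u n s w - real ((n-s) div k) / real (card A) ^ k)^2)
     \<le> real (card A) ^ n * real ((n-s) div k)"
proof -
  let ?b = "real (card A)"
  let ?m = "(n-s) div k"
  let ?B = "?b ^ n"
  let ?q = "?b ^ k"
  let ?W = "Wd A n"
  have b0: "?b > 0" using A by (simp add: card_gt_0_iff)
  have q1: "?q \<ge> 1" using b0 A by (simp add: card_gt_0_iff Suc_le_eq[symmetric] one_le_power)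
  have cs_eq: "\<And>w. cs u n s w = (\<Sum>t<?m. Ind u w (s + t*k))" unfolding cs_def using u by simp
  have S1: "(\<Sum>w\<in>?W. cs u n s w) = real ?m * ?B / ?q"
  proof -
    have "(\<Sum>w\<in>?W. cs u n s w) = (\<Sum>t<?m. \<Sum>w\<in>?W. Ind u w (s + t*k) * Ind u w (s + t*k))"
      unfolding cs_eq Ind_sq by (rule sum.swap)
    also have "\<dots> = (\<Sum>t<?m. ?B / ?q)"
      by (intro sum.cong refl) (simp add: pair_sum[OF A u])
    finally show ?thesis by simp
  qed
  have S2: "(\<Sum>w\<in>?W. (cs u n s w)^2) = real ?m * (?B / ?q + (real ?m - 1) * (?B / ?q^2))"
  proof -
    have "(\<Sum>w\<in>?W. (cs u n s w)^2) = (\<Sum>w\<in>?W. \<Sum>t<?m. \<Sum>t'<?m. Ind u w (s + t*k) * Ind u w (s + t'*k))"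
      unfolding cs_eq power2_eq_square sum_product by simp
    also have "\<dots> = (\<Sum>t<?m. \<Sum>t'<?m. \<Sum>w\<in>?W. Ind u w (s + t*k) * Ind u w (s + t'*k))"
      by (simp add: sum.swap[of _ ?W] sum.swap[of _ ?W "{..<?m}"])
    also have "\<dots> = (\<Sum>t<?m. \<Sum>t'<?m. (if t = t' then ?B / ?q else ?B / ?q^2))"
      by (intro sum.cong refl) (simp add: pair_sum[OF A u])
    also have "\<dots> = (\<Sum>t<?m. ?B / ?q + (real ?m - 1) * (?B / ?q^2))"
      by (intro sum.cong refl) (simp add: sum_delta_const)
    finally show ?thesis by simp
  qed
  have cW: "real (card ?W) = ?B" using Wd_card[OF A(1)] by simp
  have "(\<Sum>w\<in>?W. (cs u n s w - real ?m / ?q)^2) =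
     (\<Sum>w\<in>?W. (cs u n s w)^2) - 2 * (real ?m / ?q) * (\<Sum>w\<in>?W. cs u n s w) + real (card ?W) * (real ?m / ?q)^2"
    by (simp add: power2_diff sum.distrib sum_subtractf sum_distrib_left sum_divide_distrib algebra_simps)
  also have "\<dots> = real ?m * ?B / ?q - real ?m * ?B / ?q^2"
    unfolding S1 S2 cW using b0 by (simp add: field_simps power2_eq_square)
  also have "\<dots> \<le> real ?m * ?B / ?q" using b0 by simp
  also have "\<dots> \<le> real ?m * ?B"
  proof -
    have "real ?m * ?B * 1 \<le> real ?m * ?B * ?q" by (rule mult_left_mono[OF q1]) (use b0 in simp)
    then show ?thesis using q1 by (simp add: divide_le_eq)
  qed
  finally show ?thesis by (simp add: mult.commute)
qed



lemma mod_same: fixes a i i' k :: nat assumes "a \<le> i*k" "i \<le> i'" shows "(i'*k - a) mod k = (i*k - a) mod k"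
proof -
  obtain d where d: "i' = i + d" using assms(2) le_Suc_ex by blast
  then have "i'*k - a = (i*k - a) + d*k" using assms(1) by (simp add: algebra_simps)
  then show ?thesis by simp
qed

lemma cs_nonneg: "cs u n s w \<ge> 0"
  unfolding cs_def Ind_def by (intro sum_nonneg) auto

lemma cs_card: "cs u n s w = real (card {t. t < (n - s) div length u \<and> slotm u w (s + t * length u)})"
proof -
  have "cs u n s w = real (card {t\<in>{..<(n - s) div length u}. slotm u w (s + t * length u)})"
    unfolding cs_def Ind_def by (rule sum_Ind_card) simp
  also have "{t\<in>{..<(n - s) div length u}. slotm u w (s + t * length u)} = {t. t < (n - s) div length u \<and> slotm u w (s + t * length u)}"
    by auto
  finally show ?thesis .
qed

lemma inside_bound:
  fixes x :: "nat \<Rightarrow> 'a"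
  assumes u: "length u = k" "k \<ge> 1"
  shows "\<exists>s<k. real (card {i. j*l \<le> i*k \<and> i*k + k \<le> j*l + l \<and> Bk x k i = u}) \<le> cs u l s (Bk x l j)"
proof (cases "{i. j*l \<le> i*k \<and> i*k + k \<le> j*l + l \<and> Bk x k i = u} = {}")
  case True
  then have "real (card {i. j*l \<le> i*k \<and> i*k + k \<le> j*l + l \<and> Bk x k i = u}) \<le> cs u l 0 (Bk x l j)"
    using cs_nonneg[of u l 0] by (simp only: card.empty) simp
  moreover have "(0::nat) < k" using u by simp
  ultimately show ?thesis by (intro exI[where x=0] conjI)
next
  case False
  let ?I = "{i. j*l \<le> i*k \<and> i*k + k \<le> j*l + l \<and> Bk x k i = u}"
  obtain i0 where i0: "i0 \<in> ?I" using False by blast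
  define s where "s = (i0*k - j*l) mod k"
  have sk: "s < k" unfolding s_def using u by simp
  have smod: "(i*k - j*l) mod k = s" if "i \<in> ?I" for i
  proof (cases "i \<le> i0")
    case True then show ?thesis unfolding s_def using mod_same[of "j*l" i k i0] that by simp
  next
    case False then show ?thesis unfolding s_def using mod_same[of "j*l" i0 k i] i0 by simp
  qed
  define T where "T = {t. t < (l - s) div k \<and> slotm u (Bk x l j) (s + t * k)}"
  define f where "f i = (i*k - j*l) div k" for i
  have decomp: "i*k - j*l = s + f i * k" if "i \<in> ?I" for i
    using div_mult_mod_eq[of "i*k - j*l" k] smod[OF that] unfolding f_def by linarith
  have inj: "inj_on f ?I"
  proof (rule inj_onI)
    fix i i' assume a: "i \<in> ?I" "i' \<in> ?I" "f i = f i'"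
    have "i*k - j*l = s + f i * k" "i'*k - j*l = s + f i' * k" using decomp a(1,2) by auto
    then have "i*k - j*l = i'*k - j*l" using a(3) by simp
    moreover have "j*l \<le> i*k" "j*l \<le> i'*k" using a(1,2) by auto
    ultimately have "i*k = i'*k" by linarith
    then show "i = i'" using u by simp
  qed
  have img: "f ` ?I \<subseteq> T"
  proof
    fix t assume "t \<in> f ` ?I"
    then obtain i where i: "i \<in> ?I" "t = f i" by blast
    let ?r = "i*k - j*l"
    have r: "?r = s + t*k" using decomp[OF i(1)] i(2) by simp
    have rl: "?r + k \<le> l" using i(1) by (simp only: mem_Collect_eq) linarith
    have "Suc t * k \<le> l - s" using r rl by simp
    then have "Suc t \<le> (l - s) div k" using u less_eq_div_iff_mult_less_eq[of k "Suc t" "l-s"] by simp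
    moreover have "slotm u (Bk x l j) (s + t * k)"
      unfolding slotm_def
    proof (intro allI impI)
      fix q assume q: "q < length u"
      have "Bk x l j ! (s + t*k + q) = x (j*l + (?r + q))" using r rl q u unfolding Bk_def by simp
      also have "j*l + (?r + q) = i*k + q" using i(1) by simp
      also have "x (i*k+q) = Bk x k i ! q" using q u unfolding Bk_def by simp
      also have "\<dots> = u ! q" using i(1) by simp
      finally show "Bk x l j ! (s + t*k + q) = u ! q" .
    qed
    ultimately show "t \<in> T" unfolding T_def by simp
  qed
  have finT: "finite T" unfolding T_def by simp
  have "card ?I \<le> card T" by (rule card_inj_on_le[OF inj img finT])
  moreover have "cs u l s (Bk x l j) = real (card T)" unfolding cs_card T_def using u by simp
  ultimately show ?thesis using sk by auto
qed



lemma straddle: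
  fixes x :: "nat \<Rightarrow> 'a" and k l M :: nat
  assumes k: "k \<ge> 1" and l: "l \<ge> 1"
  shows "card {i. i < M \<and> Bk x k i = u} \<le>
    (\<Sum>j<M*k div l + 1. card {i. j*l \<le> i*k \<and> i*k + k \<le> j*l + l \<and> Bk x k i = u}) + (M*k div l + 1)"
proof -
  let ?J = "M*k div l + 1"
  let ?I = "\<lambda>j. {i. j*l \<le> i*k \<and> i*k + k \<le> j*l + l \<and> Bk x k i = u}"
  let ?N = "{i. i < M \<and> \<not> (i*k + k \<le> (i*k div l)*l + l)}"
  have finI: "finite (?I j)" for j
  proof (rule finite_subset)
    show "?I j \<subseteq> {..j*l+l}"
    proof
      fix i assume "i \<in> ?I j"
      then have "i*k \<le> j*l + l" by simp
      moreover have "i \<le> i*k" using k by simp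
      ultimately show "i \<in> {..j*l+l}" using le_trans by (simp only: atMost_iff)
    qed
  qed simp
  have finN: "finite ?N" by (rule finite_subset[of _ "{..<M}"]) auto
  have sub: "{i. i < M \<and> Bk x k i = u} \<subseteq> (\<Union>j<?J. ?I j) \<union> ?N"
  proof
    fix i assume i: "i \<in> {i. i < M \<and> Bk x k i = u}"
    let ?j = "i*k div l"
    have "i*k \<le> M*k" using i by simp
    then have "?j \<le> M*k div l" by (rule div_le_mono)
    then have jJ: "?j < ?J" by simp
    have "?j * l \<le> i*k" by (rule div_times_less_eq_dividend)
    then show "i \<in> (\<Union>j<?J. ?I j) \<union> ?N" using i jJ by auto
  qed
  have "card {i. i < M \<and> Bk x k i = u} \<le> card ((\<Union>j<?J. ?I j) \<union> ?N)"
    by (rule card_mono) (use finI finN sub in auto)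
  also have "\<dots> \<le> card (\<Union>j<?J. ?I j) + card ?N" by (rule card_Un_le)
  also have "card (\<Union>j<?J. ?I j) \<le> (\<Sum>j<?J. card (?I j))" by (rule card_UN_le) simp
  also have "card ?N \<le> ?J"
  proof -
    have inj: "inj_on (\<lambda>i. i*k div l) ?N"
    proof (rule inj_onI, rule ccontr)
      fix i i' assume a: "i \<in> ?N" "i' \<in> ?N" "i*k div l = i'*k div l" "i \<noteq> i'"
      have key: False if "a \<in> ?N" "b \<in> ?N" "a*k div l = b*k div l" "a < b" for a b
      proof -
        have "a*k + k \<le> b*k" using that(4) k
          by (metis add.commute mult_Suc mult_le_mono1 Suc_leI)
        moreover have "(a*k div l)*l + l < a*k + k" using that(1) by simp
        moreover have "b*k < (b*k div l)*l + l"
          using l by (metis add.commute div_mult_mod_eq mod_less_divisor nat_add_left_cancel_less less_le_trans zero_less_one)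
        ultimately show False using that(3) by simp
      qed
      show False
      proof (cases "i < i'")
        case True then show ?thesis using key[OF a(1,2,3)] by simp
      next
        case False then have "i' < i" using a(4) by simp
        then show ?thesis using key[OF a(2,1) a(3)[symmetric]] by simp
      qed
    qed
    have img: "(\<lambda>i. i*k div l) ` ?N \<subseteq> {..<?J}"
    proof
      fix j assume "j \<in> (\<lambda>i. i*k div l) ` ?N"
      then obtain i where i: "i \<in> ?N" "j = i*k div l" by blast
      have "i*k \<le> M*k" using i by simp
      then have "i*k div l \<le> M*k div l" by (rule div_le_mono)
      then show "j \<in> {..<?J}" using i by simp
    qed
    show ?thesis using card_inj_on_le[OF inj img] by simp
  qed
  finally show ?thesis by simp
qed

lemma regroup:
  assumes "finite A" "\<And>n. x n \<in> A"
  shows "(\<Sum>j<J. g (Bk x l j)) = (\<Sum>w\<in>Wd A l. real (card {j. j < J \<and> Bk x l j = w}) * (g w :: real))"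
proof -
  have inW: "Bk x l j \<in> Wd A l" for j using assms(2) unfolding Wd_def Bk_def by auto
  have "(\<Sum>j<J. g (Bk x l j)) = (\<Sum>j<J. \<Sum>w\<in>Wd A l. (if Bk x l j = w then g w else 0))"
    using inW by (simp add: sum.delta Wd_finite[OF assms(1)])
  also have "\<dots> = (\<Sum>w\<in>Wd A l. \<Sum>j<J. (if Bk x l j = w then 1 else 0) * g w)"
    by (subst sum.swap) (intro sum.cong refl, simp)
  also have "\<dots> = (\<Sum>w\<in>Wd A l. real (card {j. j < J \<and> Bk x l j = w}) * g w)"
  proof (intro sum.cong refl)
    fix w
    have "(\<Sum>j<J. (if Bk x l j = w then 1 else 0) * g w) = (\<Sum>j<J. (if Bk x l j = w then 1 else 0)) * g w"
      by (simp add: sum_distrib_right)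
    also have "(\<Sum>j<J. (if Bk x l j = w then 1 else 0::real)) = real (card {j\<in>{..<J}. Bk x l j = w})"
      by (rule sum_Ind_card) simp
    also have "{j\<in>{..<J}. Bk x l j = w} = {j. j < J \<and> Bk x l j = w}" by auto
    finally show "(\<Sum>j<J. (if Bk x l j = w then 1 else 0) * g w) = real (card {j. j < J \<and> Bk x l j = w}) * g w" .
  qed
  finally show ?thesis .
qed

lemma scalar:
  fixes c m m0 eta p L :: real
  assumes "m0 > 0" "m \<ge> m0" "eta > 0" "p \<ge> 0" "m \<le> L"
  shows "c \<le> L*(p+eta) + (c - m*p)^2/(eta*m0)"
proof (cases "c - m*p \<le> eta*m")
  case True
  have "c \<le> m*(p+eta)" using True by (simp add: algebra_simps)
  also have "\<dots> \<le> L*(p+eta)" using assms by (intro mult_right_mono) auto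
  finally show ?thesis using assms by (smt (verit) divide_nonneg_pos mult_pos_pos zero_le_power2)
next
  case False
  have pos: "eta*m0 > 0" using assms by simp
  have "eta*m0 \<le> eta*m" using assms by simp
  then have d: "c - m*p \<ge> eta*m0" using False by simp
  have "(c - m*p)*(eta*m0) \<le> (c - m*p)*(c-m*p)" using d pos by (intro mult_left_mono) auto
  then have "c - m*p \<le> (c - m*p)^2/(eta*m0)" using pos by (simp add: le_divide_eq power2_eq_square)
  moreover have "m*p \<le> L*(p+eta)" using assms
    by (smt (verit) mult_mono mult_nonneg_nonneg)
  ultimately show ?thesis by simp
qed



lemma ms_bounds:
  fixes l k s :: nat
  assumes "k \<ge> 1" "s < k" "l \<ge> 4*k"
  shows "real l / (2*real k) \<le> real ((l - s) div k)" "real ((l - s) div k) \<le> real l / real k"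
proof -
  let ?a = "l - s"
  have k0: "real k > 0" using assms by simp
  have "?a < (?a div k + 1) * k" using assms(1)
    by (metis add.commute div_mult_mod_eq mod_less_divisor nat_add_left_cancel_less less_le_trans zero_less_one mult_Suc Suc_eq_plus1)
  then have "real ?a < (real (?a div k) + 1) * real k" by (metis of_nat_1 of_nat_add of_nat_less_iff of_nat_mult)
  moreover have "real ?a \<ge> real l - real k" using assms by simp
  ultimately have "real l - real k < (real (?a div k) + 1) * real k" by simp
  then have "real l < (real (?a div k) + 2) * real k" by (simp add: algebra_simps)
  then have "real l / real k < real (?a div k) + 2" using k0 by (simp add: divide_less_eq)
  moreover have "real l / real k \<ge> 4" using assms k0 by (simp add: le_divide_eq)
  ultimately show "real l / (2*real k) \<le> real ((l - s) div k)" using k0 by (simp add: field_simps)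
  have "(?a div k) * k \<le> l" by (rule le_trans[OF div_times_less_eq_dividend diff_le_self])
  then have "real (?a div k) * real k \<le> real l" by (metis of_nat_le_iff of_nat_mult)
  then show "real ((l - s) div k) \<le> real l / real k" using k0 by (simp add: le_divide_eq)
qed

lemma block_bound:
  fixes x :: "nat \<Rightarrow> 'a" and u :: "'a list"
  assumes A: "finite A" "\<And>n. x n \<in> A"
    and u: "set u \<subseteq> A" "length u = k" "k \<ge> 1"
    and l: "l \<ge> 4*k"
    and eta: "eta > 0" and C: "C > 0"
    and J: "J = M*k div l + 1"
    and N: "\<forall>w\<in>Wd A l. real (card {j. j < J \<and> Bk x l j = w}) \<le> C / real (card A) ^ l * real J"
  shows "real (card {i. i < M \<and> Bk x k i = u}) \<le>
     real J * (real l / real k * (1 / real (card A) ^ k + eta) + 2 * real k * C / eta + 1)"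
proof -
  let ?b = "real (card A)"
  let ?p = "1 / ?b ^ k"
  let ?m0 = "real l / (2 * real k)"
  let ?ms = "\<lambda>s. (l - s) div k"
  let ?Q = "\<lambda>s w. (cs u l s w - real (?ms s) / ?b ^ k)^2"
  let ?F = "\<lambda>w. real l / real k * (?p + eta) + (\<Sum>s<k. ?Q s w) / (eta * ?m0)"
  let ?I = "\<lambda>j. {i. j*l \<le> i*k \<and> i*k + k \<le> j*l + l \<and> Bk x k i = u}"
  have Ane: "A \<noteq> {}" using A(2) by blast
  have b0: "?b > 0" using A(1) Ane by (simp add: card_gt_0_iff)
  have k0: "real k > 0" using u by simp
  have l1: "l \<ge> 1" using l u by simp
  have m00: "?m0 > 0" using l1 k0 by simp
  have pe: "?p + eta \<ge> 0" using eta b0 by simp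
  have step1: "real (card {i. i < M \<and> Bk x k i = u}) \<le> (\<Sum>j<J. real (card (?I j))) + real J"
  proof -
    have nat: "card {i. i < M \<and> Bk x k i = u} \<le> (\<Sum>j<J. card (?I j)) + J"
      using straddle[OF u(3) l1, of M x u] J by simp
    have "real (card {i. i < M \<and> Bk x k i = u}) \<le> real ((\<Sum>j<J. card (?I j)) + J)"
      using nat by (rule of_nat_mono)
    then show ?thesis by simp
  qed
  have step2: "real (card (?I j)) \<le> ?F (Bk x l j)" for j
  proof -
    obtain s where s: "s < k" "real (card (?I j)) \<le> cs u l s (Bk x l j)"
      using inside_bound[OF u(2,3), of j l x] by blast
    have mb: "?m0 \<le> real (?ms s)" "real (?ms s) \<le> real l / real k" using ms_bounds[OF u(3) s(1) l] by auto
    have h1: "cs u l s (Bk x l j) \<le> real l / real k * (?p + eta) + (cs u l s (Bk x l j) - real (?ms s) * ?p)^2 / (eta * ?m0)"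
      by (rule scalar[OF m00 mb(1) eta _ mb(2)]) (use b0 in simp)
    have h0: "(cs u l s (Bk x l j) - real (?ms s) * ?p)^2 = ?Q s (Bk x l j)" by simp
    have h2: "?Q s (Bk x l j) \<le> (\<Sum>s<k. ?Q s (Bk x l j))"
      by (rule member_le_sum) (use s in auto)
    have h3: "?Q s (Bk x l j) / (eta * ?m0) \<le> (\<Sum>s<k. ?Q s (Bk x l j)) / (eta * ?m0)"
      by (rule divide_right_mono[OF h2]) (use eta m00 in simp)
    show ?thesis using s(2) h1 h3 unfolding h0 by linarith
  qed
  have step3: "(\<Sum>j<J. ?F (Bk x l j)) = (\<Sum>w\<in>Wd A l. real (card {j. j < J \<and> Bk x l j = w}) * ?F w)"
    by (rule regroup[OF A])
  have NJ: "(\<Sum>w\<in>Wd A l. real (card {j. j < J \<and> Bk x l j = w})) = real J"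
    using regroup[OF A, where J=J and g="\<lambda>_. 1" and l=l] by simp
  have Qbound: "(\<Sum>w\<in>Wd A l. real (card {j. j < J \<and> Bk x l j = w}) * (\<Sum>s<k. ?Q s w)) \<le> C * real J * real l"
  proof -
    have "(\<Sum>w\<in>Wd A l. real (card {j. j < J \<and> Bk x l j = w}) * (\<Sum>s<k. ?Q s w))
        \<le> (\<Sum>w\<in>Wd A l. (C / ?b ^ l * real J) * (\<Sum>s<k. ?Q s w))"
      using N by (intro sum_mono mult_right_mono) (auto intro: sum_nonneg)
    also have "\<dots> = (C / ?b ^ l * real J) * (\<Sum>s<k. \<Sum>w\<in>Wd A l. ?Q s w)"
      by (simp add: sum_distrib_left sum.swap[of _ "Wd A l"])
    also have "\<dots> \<le> (C / ?b ^ l * real J) * (\<Sum>s<k. ?b ^ l * (real l / real k))"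
    proof (intro mult_left_mono sum_mono)
      fix s assume "s \<in> {..<k}"
      then have s: "s < k" by simp
      have "(\<Sum>w\<in>Wd A l. ?Q s w) \<le> ?b ^ l * real (?ms s)"
        by (rule second_moment[OF A(1) Ane u])
      also have "\<dots> \<le> ?b ^ l * (real l / real k)"
        using ms_bounds[OF u(3) s l] b0 by (intro mult_left_mono) auto
      finally show "(\<Sum>w\<in>Wd A l. ?Q s w) \<le> ?b ^ l * (real l / real k)" .
    qed (use C b0 in simp)
    also have "\<dots> = C * real J * real l" using b0 k0 by simp
    finally show ?thesis .
  qed
  have "(\<Sum>w\<in>Wd A l. real (card {j. j < J \<and> Bk x l j = w}) * ?F w) =
      real l / real k * (?p + eta) * (\<Sum>w\<in>Wd A l. real (card {j. j < J \<and> Bk x l j = w}))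
      + (\<Sum>w\<in>Wd A l. real (card {j. j < J \<and> Bk x l j = w}) * (\<Sum>s<k. ?Q s w)) / (eta * ?m0)"
    by (simp add: algebra_simps sum.distrib sum_distrib_left sum_divide_distrib)
  also have "\<dots> \<le> real l / real k * (?p + eta) * real J + (C * real J * real l) / (eta * ?m0)"
  proof -
    have d: "(\<Sum>w\<in>Wd A l. real (card {j. j < J \<and> Bk x l j = w}) * (\<Sum>s<k. ?Q s w)) / (eta * ?m0)
       \<le> (C * real J * real l) / (eta * ?m0)"
      by (rule divide_right_mono[OF Qbound]) (use eta m00 in simp)
    show ?thesis unfolding NJ using d by linarith
  qed
  also have "(C * real J * real l) / (eta * ?m0) = real J * (2 * real k * C / eta)"
    using eta k0 l1 by (simp add: field_simps)
  finally have step4: "(\<Sum>j<J. ?F (Bk x l j)) \<le> real l / real k * (?p + eta) * real J + real J * (2 * real k * C / eta)"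
    using step3 by simp
  have "real (card {i. i < M \<and> Bk x k i = u}) \<le> (\<Sum>j<J. ?F (Bk x l j)) + real J"
    using step1 sum_mono[of "{..<J}" "\<lambda>j. real (card (?I j))" "\<lambda>j. ?F (Bk x l j)"] step2 by force
  also have "\<dots> \<le> real J * (real l / real k * (?p + eta) + 2 * real k * C / eta + 1)"
    using step4 by (simp add: algebra_simps)
  finally show ?thesis .
qed



lemma upper_bound:
  fixes x :: "nat \<Rightarrow> 'a" and u :: "'a list" and C :: real
  assumes A: "finite A" "\<And>n. x n \<in> A"
    and u: "set u \<subseteq> A" "length u = k" "k \<ge> 1"
    and C: "C > 0"
    and S: "infinite {l::nat. \<forall>w. length w = l \<and> set w \<subseteq> A \<longrightarrow>
          limsup (\<lambda>N. ereal (real (aligned_occ (prefix_word x (l * N)) w) / real N))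
            < ereal (C / real (card A) ^ l)}" (is "infinite ?S")
    and eps: "eps > 0"
  shows "eventually (\<lambda>M. real (card {i. i < M \<and> Bk x k i = u}) \<le> (1 / real (card A) ^ k + eps) * real M) sequentially"
proof -
  let ?b = "real (card A)"
  let ?p = "1 / ?b ^ k"
  define eta where "eta = eps / 4"
  have eta: "eta > 0" using eps unfolding eta_def by simp
  have Ane: "A \<noteq> {}" using A(2) by blast
  have b0: "?b > 0" using A(1) Ane by (simp add: card_gt_0_iff)
  have k0: "real k > 0" using u by simp
  define L1 where "L1 = real k * (2 * real k * C / eta + 1) / eta"
  obtain l where l: "l \<ge> max (4*k) (nat \<lceil>L1\<rceil>)" "l \<in> ?S"
    using S unfolding infinite_nat_iff_unbounded_le by blast
  have l4: "l \<ge> 4*k" using l by simp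
  have l1: "l \<ge> 1" using l4 u by simp
  have lL1: "real l \<ge> L1"
  proof -
    have "nat \<lceil>L1\<rceil> \<le> l" using l(1) by simp
    then have "real (nat \<lceil>L1\<rceil>) \<le> real l" by (rule of_nat_mono)
    moreover have "L1 \<le> real (nat \<lceil>L1\<rceil>)" by (rule real_nat_ceiling_ge)
    ultimately show ?thesis by linarith
  qed
  have lim: "limsup (\<lambda>N. ereal (real (aligned_occ (prefix_word x (l * N)) w) / real N)) < ereal (C / ?b ^ l)"
    if "w \<in> Wd A l" for w
    using l(2) that unfolding Wd_def by auto
  have ev: "\<forall>w\<in>Wd A l. eventually (\<lambda>N. real (card {j. j < N \<and> Bk x l j = w}) \<le> C / ?b ^ l * real N) sequentially"
  proof
    fix w assume w: "w \<in> Wd A l"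
    have lw: "length w = l" using w unfolding Wd_def by simp
    have "eventually (\<lambda>N. ereal (real (aligned_occ (prefix_word x (l * N)) w) / real N) < ereal (C / ?b ^ l)) sequentially"
      using Limsup_lessD[OF lim[OF w]] .
    moreover have "eventually (\<lambda>N. N > 0) sequentially" by (rule eventually_gt_at_top)
    ultimately show "eventually (\<lambda>N. real (card {j. j < N \<and> Bk x l j = w}) \<le> C / ?b ^ l * real N) sequentially"
    proof eventually_elim
      case (elim N)
      have "aligned_occ (prefix_word x (l * N)) w = card {j. j < N \<and> Bk x l j = w}"
        using aligned_occ_Bk[OF l1 lw, of x "l*N"] l1 by simp
      then have "real (card {j. j < N \<and> Bk x l j = w}) / real N < C / ?b ^ l" using elim(1) by simp
      then show ?case using elim(2) by (simp add: divide_less_eq less_imp_le mult.commute)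
    qed
  qed
  then have "eventually (\<lambda>N. \<forall>w\<in>Wd A l. real (card {j. j < N \<and> Bk x l j = w}) \<le> C / ?b ^ l * real N) sequentially"
    by (rule eventually_ball_finite[OF Wd_finite[OF A(1)]])
  then obtain N0 where N0: "\<And>N. N \<ge> N0 \<Longrightarrow> \<forall>w\<in>Wd A l. real (card {j. j < N \<and> Bk x l j = w}) \<le> C / ?b ^ l * real N"
    unfolding eventually_sequentially by blast
  define K where "K = real l / real k * (?p + eta) + 2 * real k * C / eta + 1"
  have K0: "K \<ge> 0" unfolding K_def using eta C b0 k0 by simp
  show ?thesis unfolding eventually_sequentially
  proof (intro exI allI impI)
    fix M assume M: "M \<ge> max (N0 * l) (nat \<lceil>K / eta\<rceil>)"
    define J where "J = M*k div l + 1"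
    have "N0 * l \<le> M" using M by simp
    moreover have "M \<le> M * k" using u by simp
    ultimately have "N0 * l \<le> M * k" by (rule le_trans)
    then have "(N0 * l) div l \<le> M*k div l" by (rule div_le_mono)
    then have "N0 \<le> M*k div l" using l1 by simp
    then have JN0: "J \<ge> N0" unfolding J_def by simp
    have bb: "real (card {i. i < M \<and> Bk x k i = u}) \<le> real J * K"
      unfolding K_def by (rule block_bound[OF A u l4 eta C J_def N0[OF JN0]])
    have Jb: "real J \<le> real M * real k / real l + 1"
    proof -
      have "(M*k div l) * l \<le> M*k" by (rule div_times_less_eq_dividend)
      then have "real (M*k div l) * real l \<le> real M * real k" by (metis of_nat_le_iff of_nat_mult)
      then have "real (M*k div l) \<le> real M * real k / real l" using l1 by (simp add: le_divide_eq)
      then show ?thesis unfolding J_def by simp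
    qed
    have "real J * K \<le> (real M * real k / real l + 1) * K" using Jb K0 by (rule mult_right_mono)
    also have "\<dots> = real M * (?p + eta) + real M * (real k / real l * (2 * real k * C / eta + 1)) + K"
      unfolding K_def using l1 k0 eta b0 by (simp add: field_simps)
    also have "real k / real l * (2 * real k * C / eta + 1) \<le> eta"
    proof -
      have "2 * real k * C / eta + 1 > 0" using k0 eta C by (intro add_nonneg_pos divide_nonneg_pos mult_nonneg_nonneg) auto
      then have "L1 > 0" unfolding L1_def using k0 eta by simp
      then have "real l > 0" using lL1 by simp
      have "real k * (2 * real k * C / eta + 1) \<le> eta * real l"
        using lL1 eta unfolding L1_def by (simp add: divide_le_eq mult.commute)
      then show ?thesis using \<open>real l > 0\<close> by (simp add: divide_le_eq mult.commute)
    qed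
    hence "real M * (real k / real l * (2 * real k * C / eta + 1)) \<le> real M * eta" by (rule mult_left_mono) simp
    also have "K \<le> real M * eta"
    proof -
      have "nat \<lceil>K / eta\<rceil> \<le> M" using M by simp
      then have "real (nat \<lceil>K / eta\<rceil>) \<le> real M" by (rule of_nat_mono)
      moreover have "K / eta \<le> real (nat \<lceil>K / eta\<rceil>)" by (rule real_nat_ceiling_ge)
      ultimately have "real M \<ge> K / eta" by linarith
      then show ?thesis using eta by (simp add: divide_le_eq mult.commute)
    qed
    finally have "real J * K \<le> real M * (?p + eta) + real M * eta + real M * eta" by simp
    also have "\<dots> \<le> (?p + eps) * real M" unfolding eta_def using eps by (simp add: algebra_simps)
    finally show "real (card {i. i < M \<and> Bk x k i = u}) \<le> (?p + eps) * real M" using bb by simp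
  qed
qed



lemma sum_cnt:
  assumes "finite A" "\<And>n. x n \<in> A"
  shows "(\<Sum>v\<in>Wd A k. real (card {i. i < M \<and> Bk x k i = v})) = real M"
  using regroup[OF assms, where J=M and g="\<lambda>_. 1" and l=k] by simp

lemma conv_blocks:
  fixes x :: "nat \<Rightarrow> 'a"
  assumes A: "finite A" "\<And>n. x n \<in> A" and u: "u \<in> Wd A k"
    and up: "\<And>v eps. v \<in> Wd A k \<Longrightarrow> eps > 0 \<Longrightarrow>
       eventually (\<lambda>M. real (card {i. i < M \<and> Bk x k i = v}) \<le> (1 / real (card A) ^ k + eps) * real M) sequentially"
  shows "(\<lambda>M. real (card {i. i < M \<and> Bk x k i = u}) / real M) \<longlonglongrightarrow> 1 / real (card A) ^ k"
proof -
  let ?W = "Wd A k"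
  let ?Q = "real (card A) ^ k"
  let ?p = "1 / ?Q"
  let ?c = "\<lambda>v M. real (card {i. i < M \<and> Bk x k i = v})"
  have Ane: "A \<noteq> {}" using A(2) by blast
  have Q0: "?Q > 0" using A(1) Ane by (simp add: card_gt_0_iff)
  have cW: "real (card ?W) = ?Q" using Wd_card[OF A(1)] by simp
  have finW: "finite ?W" by (rule Wd_finite[OF A(1)])
  show ?thesis unfolding tendsto_iff
  proof (intro allI impI)
    fix e :: real assume e: "e > 0"
    define d where "d = e / (2 * ?Q)"
    have d: "d > 0" unfolding d_def using e Q0 by simp
    have "eventually (\<lambda>M. \<forall>v\<in>?W. ?c v M \<le> (?p + d) * real M) sequentially"
      using up d by (intro eventually_ball_finite[OF finW]) auto
    moreover have "eventually (\<lambda>M. M > 0) sequentially" by (rule eventually_gt_at_top)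
    ultimately show "eventually (\<lambda>M. dist (?c u M / real M) ?p < e) sequentially"
    proof eventually_elim
      case (elim M)
      have M0: "real M > 0" using elim(2) by simp
      have upu: "?c u M \<le> (?p + d) * real M" using elim(1) u by blast
      have "?c u M + (\<Sum>v\<in>?W - {u}. ?c v M) = real M"
        using sum_cnt[OF A, where k=k and M=M] sum.remove[OF finW u, of "\<lambda>v. ?c v M"] by simp
      moreover have "(\<Sum>v\<in>?W - {u}. ?c v M) \<le> (\<Sum>v\<in>?W - {u}. (?p + d) * real M)"
        using elim(1) by (intro sum_mono) auto
      moreover have "(\<Sum>v\<in>?W - {u}. (?p + d) * real M) = (?Q - 1) * ((?p + d) * real M)"
      proof -
        have "card ?W > 0" using u finW by (auto simp: card_gt_0_iff)
        then have "real (card (?W - {u})) = real (card ?W) - 1"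
          using u finW by (simp add: card_Diff_singleton of_nat_diff)
        then have "real (card (?W - {u})) = ?Q - 1" using cW by simp
        then show ?thesis by simp
      qed
      ultimately have low: "?c u M \<ge> real M - (?Q - 1) * ((?p + d) * real M)" by linarith
      have "real M - (?Q - 1) * ((?p + d) * real M) = real M * (?p - (?Q - 1) * d)"
        using Q0 by (simp add: field_simps)
      also have "(?Q - 1) * d \<le> e / 2"
      proof -
        have "(?Q - 1) * d \<le> ?Q * d" using d by simp
        also have "\<dots> = e / 2" unfolding d_def using Q0 by simp
        finally show ?thesis .
      qed
      then have "real M * (?p - (?Q - 1) * d) \<ge> real M * (?p - e / 2)" using M0 by simp
      finally have low2: "?c u M / real M \<ge> ?p - e / 2" using low M0 by (simp add: le_divide_eq mult.commute)
      have up2: "?c u M / real M \<le> ?p + d" using upu M0 by (simp add: divide_le_eq)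
      have "d < e" unfolding d_def using e Q0
      proof -
        have "card A \<ge> 1" using A(1) Ane by (simp add: Suc_le_eq card_gt_0_iff)
        then have "real (card A) \<ge> 1" by simp
        then have "?Q \<ge> 1" by (rule one_le_power)
        then have "2 * ?Q > 1" by simp
        then show "e / (2 * ?Q) < e" using e by (simp add: divide_less_eq)
      qed
      then show ?case using low2 up2 e unfolding dist_real_def by (simp add: abs_less_iff)
    qed
  qed
qed

lemma final_conv:
  fixes x :: "nat \<Rightarrow> 'a"
  assumes k: "k \<ge> 1" "length u = k"
    and g: "(\<lambda>M. real (card {i. i < M \<and> Bk x k i = u}) / real M) \<longlonglongrightarrow> p"
  shows "(\<lambda>n. real (aligned_occ (prefix_word x n) u) / (real n / real k)) \<longlonglongrightarrow> p"
proof -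
  let ?g = "\<lambda>M. real (card {i. i < M \<and> Bk x k i = u}) / real M"
  let ?r = "\<lambda>n. real (n div k) * real k / real n"
  have k0: "real k > 0" using k by simp
  have fl: "filterlim (\<lambda>n. n div k) sequentially sequentially"
    unfolding filterlim_at_top
  proof (intro allI)
    fix Z show "eventually (\<lambda>n. Z \<le> n div k) sequentially"
      unfolding eventually_sequentially
      by (rule exI[where x="Z*k"]) (use k in \<open>auto simp: less_eq_div_iff_mult_less_eq\<close>)
  qed
  have g2: "(\<lambda>n. ?g (n div k)) \<longlonglongrightarrow> p" by (rule filterlim_compose[OF g fl])
  have r: "?r \<longlonglongrightarrow> 1"
  proof (rule tendsto_sandwich[of "\<lambda>n. 1 - real k / real n" _ _ "\<lambda>_. 1"])
    show "eventually (\<lambda>n. 1 - real k / real n \<le> ?r n) sequentially"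
      using eventually_gt_at_top[of 0]
    proof eventually_elim
      case (elim n)
      have kp: "k > 0" using k(1) by simp
      have "n mod k < k" using kp by (rule mod_less_divisor)
      moreover have "n div k * k + n mod k = n" by (rule div_mult_mod_eq)
      moreover have "(n div k + 1) * k = n div k * k + k" by simp
      ultimately have "n < (n div k + 1) * k" by linarith
      then have "real n < (real (n div k) + 1) * real k" by (metis of_nat_1 of_nat_add of_nat_less_iff of_nat_mult)
      then have "real n - real k \<le> real (n div k) * real k" by (simp add: algebra_simps)
      then have "(real n - real k) / real n \<le> real (n div k) * real k / real n" by (rule divide_right_mono) simp
      then show ?case using elim by (simp add: diff_divide_distrib)
    qed
    show "eventually (\<lambda>n. ?r n \<le> 1) sequentially"
      using eventually_gt_at_top[of 0]
    proof eventually_elim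
      case (elim n)
      have "(n div k) * k \<le> n" by (rule div_times_less_eq_dividend)
      then have "real (n div k) * real k \<le> real n" by (metis of_nat_le_iff of_nat_mult)
      then show ?case using elim by (simp add: divide_le_eq)
    qed
    show "(\<lambda>n. 1 - real k / real n) \<longlonglongrightarrow> 1"
      using tendsto_diff[OF tendsto_const lim_const_over_n[of "real k"]] by simp
  qed simp
  have eq: "real (aligned_occ (prefix_word x n) u) / (real n / real k) = ?g (n div k) * ?r n" for n
  proof -
    have ao: "aligned_occ (prefix_word x n) u = card {i. i < n div k \<and> Bk x k i = u}"
      using aligned_occ_Bk[OF k(1) k(2)] .
    show ?thesis
    proof (cases "n div k = 0")
      case True then show ?thesis unfolding ao by simp
    next
      case False
      then have "n > 0" by (metis div_0 neq0_conv)
      then show ?thesis unfolding ao using False k0 by (simp add: field_simps)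
    qed
  qed
  show ?thesis unfolding eq using tendsto_mult[OF g2 r] by simp
qed


theorem lemma15:
  fixes A :: "'a set" and x :: "nat \<Rightarrow> 'a"
  assumes "finite A" and "\<And>n. x n \<in> A"
  shows "normal_word A x \<longleftrightarrow>
    (\<exists>C::real. C > 0 \<and>
       infinite {l::nat. \<forall>w. length w = l \<and> set w \<subseteq> A \<longrightarrow>
          limsup (\<lambda>N. ereal (real (aligned_occ (prefix_word x (l * N)) w) / real N))
            < ereal (C / real (card A) ^ l)})"
proof
  assume nw: "normal_word A x"
  have Ane: "A \<noteq> {}" using assms(2) by blast
  have b0: "real (card A) > 0" using assms(1) Ane by (simp add: card_gt_0_iff)
  let ?S = "{l::nat. \<forall>w. length w = l \<and> set w \<subseteq> A \<longrightarrow>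
          limsup (\<lambda>N. ereal (real (aligned_occ (prefix_word x (l * N)) w) / real N))
            < ereal (2 / real (card A) ^ l)}"
  have sub: "{l. l \<ge> 1} \<subseteq> ?S"
  proof
    fix l :: nat assume "l \<in> {l. l \<ge> 1}"
    then have l: "l \<ge> 1" by simp
    show "l \<in> ?S" unfolding mem_Collect_eq
    proof (intro allI impI)
      fix w :: "'a list" assume w: "length w = l \<and> set w \<subseteq> A"
      have h: "(\<lambda>n. real (aligned_occ (prefix_word x n) w) / (real n / real l)) \<longlonglongrightarrow> 1 / real (card A) ^ l"
        using nw w l unfolding normal_word_def by blast
      have sm: "strict_mono (\<lambda>N. l*N)" using l by (auto simp: strict_mono_def)
      have h2: "(\<lambda>N. real (aligned_occ (prefix_word x (l*N)) w) / (real (l*N) / real l)) \<longlonglongrightarrow> 1 / real (card A) ^ l"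
        using LIMSEQ_subseq_LIMSEQ[OF h sm] by (simp only: comp_def)
      have eqf: "real (l*N) / real l = real N" for N using l by simp
      have h3: "(\<lambda>N. real (aligned_occ (prefix_word x (l * N)) w) / real N) \<longlonglongrightarrow> 1 / real (card A) ^ l"
        using h2 unfolding eqf .
      have "limsup (\<lambda>N. ereal (real (aligned_occ (prefix_word x (l * N)) w) / real N)) = ereal (1 / real (card A) ^ l)"
        by (rule lim_imp_Limsup) (simp_all add: h3)
      also have "\<dots> < ereal (2 / real (card A) ^ l)" using b0 by (simp add: divide_strict_right_mono)
      finally show "limsup (\<lambda>N. ereal (real (aligned_occ (prefix_word x (l * N)) w) / real N)) < ereal (2 / real (card A) ^ l)" .
    qed
  qed
  have "infinite {l::nat. l \<ge> 1}" unfolding infinite_nat_iff_unbounded_le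
  proof
    fix m :: nat show "\<exists>n\<ge>m. n \<in> {l. l \<ge> 1}" by (rule exI[where x="Suc m"]) simp
  qed
  then have "infinite ?S" using sub infinite_super by blast
  then show "\<exists>C::real. C > 0 \<and> infinite {l::nat. \<forall>w. length w = l \<and> set w \<subseteq> A \<longrightarrow>
          limsup (\<lambda>N. ereal (real (aligned_occ (prefix_word x (l * N)) w) / real N))
            < ereal (C / real (card A) ^ l)}"
    by (intro exI[where x=2] conjI) simp_all
next
  assume "\<exists>C::real. C > 0 \<and>
       infinite {l::nat. \<forall>w. length w = l \<and> set w \<subseteq> A \<longrightarrow>
          limsup (\<lambda>N. ereal (real (aligned_occ (prefix_word x (l * N)) w) / real N))
            < ereal (C / real (card A) ^ l)}"
  then obtain C :: real where C: "C > 0" and S: "infinite {l::nat. \<forall>w. length w = l \<and> set w \<subseteq> A \<longrightarrow>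
          limsup (\<lambda>N. ereal (real (aligned_occ (prefix_word x (l * N)) w) / real N))
            < ereal (C / real (card A) ^ l)}" by blast
  show "normal_word A x" unfolding normal_word_def
  proof (intro allI impI)
    fix l :: nat and u :: "'a list"
    assume l: "l \<ge> 1" and u: "length u = l \<and> set u \<subseteq> A"
    have uW: "u \<in> Wd A l" using u unfolding Wd_def by simp
    have up: "eventually (\<lambda>M. real (card {i. i < M \<and> Bk x l i = v}) \<le> (1 / real (card A) ^ l + eps) * real M) sequentially"
      if "v \<in> Wd A l" "eps > 0" for v eps
      using upper_bound[OF assms(1,2) _ _ l C S that(2)] that(1) unfolding Wd_def by simp
    have "(\<lambda>M. real (card {i. i < M \<and> Bk x l i = u}) / real M) \<longlonglongrightarrow> 1 / real (card A) ^ l"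
      by (rule conv_blocks[OF assms uW up])
    then show "(\<lambda>n. real (aligned_occ (prefix_word x n) u) / (real n / real l)) \<longlonglongrightarrow> 1 / real (card A) ^ l"
      using u by (intro final_conv[OF l]) simp_all
  qed
qed

end
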